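(* Let $\mathcal{G}=(V,E)$ be a hypergraph on $n$ vertices. Then for every nonempty $S\subset V$, $$(r(\mathcal{G})-1)\frac{\lambda_n(L_{\mathcal{G}})\,|S|\,|V\setminus S|}{n}\ \ge\ |\partial S|\ \ge\ \frac{cr(\mathcal{G})-1}{\lfloor r(\mathcal{G})^2/4\rfloor}\,\frac{\lambda_2(L_{\mathcal{G}})\,|S|\,|V\setminus S|}{n}.$$
   Context: A hypergraph $\mathcal{G}=(V,E)$ has a finite vertex set $V$ and a set $E$ of subsets of $V$ (edges), each of cardinality at least $2$. The rank $r(\mathcal{G})$ and co-rank $cr(\mathcal{G})$ are the maximum and minimum edge cardinalities. The degree $d_i$ is the number of edges containing $i$. The Laplacian $L_{\mathcal{G}}$ is the matrix with $(L_{\mathcal{G}})_{ii}=d_i$ and $(L_{\mathcal{G}})_{ij}=-\sum_{e\in E,\, i,j\in e}\frac{1}{|e|-1}$ for $i\ne j$; its eigenvalues are $\lambda_1(L_{\mathcal{G}})\le\dots\le\lambda_n(L_{\mathcal{G}})$. The edge boundary $\partial S$ is the set of edges containing a vertex of $S$ and a vertex of $V\setminus S$. *)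

theory Defs
  imports "Jordan_Normal_Form.Char_Poly" "HOL-Library.Multiset"
begin

definition hypergraph :: "nat \<Rightarrow> nat set set \<Rightarrow> bool" where
  "hypergraph n E \<longleftrightarrow> (\<forall>e\<in>E. e \<subseteq> {0..<n} \<and> card e \<ge> 2)"

definition hrank :: "nat set set \<Rightarrow> nat" where
  "hrank E = Max (card ` E)"

definition hcorank :: "nat set set \<Rightarrow> nat" where
  "hcorank E = Min (card ` E)"

definition hdegree :: "nat set set \<Rightarrow> nat \<Rightarrow> nat" where
  "hdegree E i = card {e\<in>E. i \<in> e}"

definition hlaplacian :: "nat \<Rightarrow> nat set set \<Rightarrow> real mat" where
  "hlaplacian n E = mat n n (\<lambda>(i,j). if i = j then real (hdegree E i)
      else - (\<Sum>e\<in>{e\<in>E. i \<in> e \<and> j \<in> e}. 1 / (real (card e) - 1)))"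

(* k-th smallest eigenvalue (1-indexed), counted with multiplicity, as roots of the
   characteristic polynomial *)
definition eigval :: "real mat \<Rightarrow> nat \<Rightarrow> real" where
  "eigval A k = sorted_list_of_multiset (proots (char_poly A)) ! (k - 1)"

definition edge_boundary :: "nat \<Rightarrow> nat set set \<Rightarrow> nat set \<Rightarrow> nat set set" where
  "edge_boundary n E S = {e\<in>E. e \<inter> S \<noteq> {} \<and> e \<inter> ({0..<n} - S) \<noteq> {}}"

end

theory Submission
  imports Defs "Jordan_Normal_Form.Schur_Decomposition"
begin

lemma sym_real_eigenvalue:
  fixes A :: "real mat"
  assumes A: "A \<in> carrier_mat n n" and sym: "transpose_mat A = A" and n: "n > 0"
  shows "\<exists>e. poly (char_poly A) e = 0"
proof -
  define Ac where "Ac = map_mat complex_of_real A"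
  have Ac: "Ac \<in> carrier_mat n n" using A by (simp add: Ac_def)
  have cp: "char_poly Ac = map_poly of_real (char_poly A)"
    using of_real_hom.char_poly_hom[OF A] by (simp add: Ac_def)
  obtain as where as: "char_poly Ac = (\<Prod>a\<leftarrow>as. [:- a, 1:])" "length as = n"
    using char_poly_factorized[OF Ac] by blast
  define l where "l = as ! 0"
  have "l \<in> set as" using as(2) n by (simp add: l_def)
  hence "poly (char_poly Ac) l = 0" unfolding as(1)
    by (induct as) (auto simp: poly_prod_list)
  hence "eigenvalue Ac l" using eigenvalue_root_char_poly[OF Ac] by simp
  then obtain v where ev: "eigenvector Ac v l" unfolding eigenvalue_def by blast
  hence v: "v \<in> carrier_vec n" "v \<noteq> 0\<^sub>v n" and Av: "Ac *\<^sub>v v = l \<cdot>\<^sub>v v"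
    using Ac unfolding eigenvector_def by auto
  have entry: "(\<Sum>j<n. Ac $$ (i,j) * v $ j) = l * v $ i" if i: "i < n" for i
  proof -
    have "(Ac *\<^sub>v v) $ i = l * v $ i" using Av i v by simp
    moreover have "(Ac *\<^sub>v v) $ i = (\<Sum>j<n. Ac $$ (i,j) * v $ j)"
      using i Ac v by (simp add: scalar_prod_def atLeast0LessThan)
    ultimately show ?thesis by simp
  qed
  define s where "s = (\<Sum>i<n. \<Sum>j<n. cnj (v $ i) * Ac $$ (i,j) * v $ j)"
  define N where "N = (\<Sum>i<n. cnj (v $ i) * v $ i)"
  have sN: "s = l * N" unfolding s_def N_def
  proof (rule sum.cong[OF refl, THEN trans])
    fix i assume "i \<in> {..<n}"
    hence "(\<Sum>j<n. cnj (v $ i) * Ac $$ (i, j) * v $ j) = cnj (v $ i) * (l * v $ i)"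
      using entry[of i] by (simp add: sum_distrib_left[symmetric] mult.assoc)
    thus "(\<Sum>j<n. cnj (v $ i) * Ac $$ (i, j) * v $ j) = l * (cnj (v $ i) * v $ i)"
      by simp
  next
    show "(\<Sum>i<n. l * (cnj (v $ i) * v $ i)) = l * (\<Sum>i<n. cnj (v $ i) * v $ i)"
      by (simp add: sum_distrib_left)
  qed
  have Aij: "Ac $$ (i,j) = of_real (A $$ (i,j))" "A $$ (j,i) = A $$ (i,j)" if "i < n" "j < n" for i j
  proof -
    show "Ac $$ (i,j) = of_real (A $$ (i,j))" using that A by (simp add: Ac_def)
    have "transpose_mat A $$ (i,j) = A $$ (j,i)" using that A by simp
    thus "A $$ (j,i) = A $$ (i,j)" using sym by simp
  qed
  have "cnj s = (\<Sum>i<n. \<Sum>j<n. v $ i * Ac $$ (i,j) * cnj (v $ j))"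
    unfolding s_def by (simp add: Aij)
  also have "\<dots> = (\<Sum>j<n. \<Sum>i<n. v $ i * Ac $$ (i,j) * cnj (v $ j))"
    by (rule sum.swap)
  also have "\<dots> = s" unfolding s_def
    by (intro sum.cong refl) (simp add: Aij mult_ac)
  finally have cs: "cnj s = s" .
  have Nr: "N = of_real (\<Sum>i<n. (cmod (v $ i))^2)" unfolding N_def
    unfolding of_real_sum by (intro sum.cong refl) (metis complex_norm_square mult.commute)
  obtain i where i: "i < n" "v $ i \<noteq> 0" using v
    by (metis eq_vecI carrier_vecD index_zero_vec(1) index_zero_vec(2))
  have "(\<Sum>i<n. (cmod (v $ i))^2) > 0"
  proof -
    have "(cmod (v $ i))^2 > 0" using i by simp
    moreover have "(cmod (v $ i))^2 \<le> (\<Sum>i<n. (cmod (v $ i))^2)"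
      by (rule member_le_sum) (use i in auto)
    ultimately show ?thesis by linarith
  qed
  then obtain r where r: "N = of_real r" "r > 0" using Nr by blast
  hence N0: "N \<noteq> 0" by simp
  have "l = s / N" using sN N0 by simp
  hence "cnj l = l" using cs r by (simp)
  hence lr: "l = of_real (Re l)" by (metis Reals_cnj_iff complex_is_Real_iff of_real_Re)
  have "poly (map_poly of_real (char_poly A)) (of_real (Re l)) = (0::complex)"
    using \<open>poly (char_poly Ac) l = 0\<close> cp lr by simp
  hence "poly (char_poly A) (Re l) = 0" by simp
  thus ?thesis by blast
qed

lemma real_conj_vec[simp]: "conjugate (v :: real vec) = v"
  by (rule eq_vecI) auto

lemma real_sprod_self_ge0: "(v :: real vec) \<bullet> v \<ge> 0"
  unfolding scalar_prod_def by (intro sum_nonneg) auto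

lemma orthonormal_exists:
  fixes v :: "real vec"
  assumes v: "v \<in> carrier_vec n" and vv: "v \<bullet> v = 1" and n: "n > 0"
  shows "\<exists>ws. set ws \<subseteq> carrier_vec n \<and> length ws = n \<and> ws ! 0 = v \<and>
     (\<forall>i<n. \<forall>j<n. ws ! i \<bullet> ws ! j = (if i = j then 1 else 0))"
proof -
  interpret cof_vec_space n "TYPE(real)" .
  have v0: "v \<noteq> 0\<^sub>v n" using vv v by auto
  define b where "b = basis_completion v"
  from basis_completion[OF v v0, folded b_def]
  have dist_b: "distinct b" and indep: "\<not> lin_dep (set b)" and b: "set b \<subseteq> carrier_vec n"
    and hdb: "hd b = v" and len_b: "length b = n" by auto
  from hdb len_b n obtain vs where bv: "b = v # vs" by (cases b, auto)
  define ws0 where "ws0 = gram_schmidt n b"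
  from gram_schmidt_result[OF b dist_b indep refl, folded ws0_def]
  have ws0: "set ws0 \<subseteq> carrier_vec n" "corthogonal ws0" "length ws0 = n" 
    by (auto simp: len_b)
  from gram_schmidt_hd[OF v, of vs, folded bv] have hd0: "hd ws0 = v" unfolding ws0_def .
  have w00: "ws0 ! 0 = v" using hd0 ws0(3) n by (cases ws0) auto
  have orth: "ws0 ! i \<bullet> ws0 ! j = 0 \<longleftrightarrow> i \<noteq> j" if "i < n" "j < n" for i j
    using corthogonalD[OF ws0(2), of i j] that ws0(3) by simp
  define ws where "ws = map (\<lambda>w. (1 / sqrt (w \<bullet> w)) \<cdot>\<^sub>v w) ws0"
  have pos: "ws0 ! i \<bullet> ws0 ! i > 0" if "i < n" for i
    using orth[OF that that] real_sprod_self_ge0[of "ws0 ! i"] by linarith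
  have car: "ws0 ! i \<in> carrier_vec n" if "i < n" for i using ws0 that by auto
  have "ws ! i \<bullet> ws ! j = (if i = j then 1 else 0)" if ij: "i < n" "j < n" for i j
  proof -
    have "ws ! i \<bullet> ws ! j = (1 / sqrt (ws0 ! i \<bullet> ws0 ! i)) * (1 / sqrt (ws0 ! j \<bullet> ws0 ! j))
       * (ws0 ! i \<bullet> ws0 ! j)"
      using ij ws0(3) car[OF ij(1)] car[OF ij(2)] by (simp add: ws_def)
    also have "\<dots> = (if i = j then 1 else 0)"
    proof (cases "i = j")
      case True
      have p: "ws0 ! i \<bullet> ws0 ! i > 0" using pos ij by simp
      have "(1 / sqrt (ws0 ! i \<bullet> ws0 ! i)) * (1 / sqrt (ws0 ! i \<bullet> ws0 ! i)) = 1 / (ws0 ! i \<bullet> ws0 ! i)"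
        using p by (simp add: real_sqrt_mult[symmetric])
      thus ?thesis using True p by simp
    next
      case False thus ?thesis using orth[OF ij] by simp
    qed
    finally show ?thesis .
  qed
  moreover have "set ws \<subseteq> carrier_vec n" using ws0(1) by (auto simp: ws_def)
  moreover have "length ws = n" using ws0(3) by (simp add: ws_def)
  moreover have "ws ! 0 = v" using n ws0(3) w00 vv by (simp add: ws_def)
  ultimately show ?thesis by blast
qed

lemma spectral:
  fixes A :: "real mat"
  assumes "A \<in> carrier_mat n n" "transpose_mat A = A"
  shows "\<exists>Q D. Q \<in> carrier_mat n n \<and> D \<in> carrier_mat n n \<and> diagonal_mat D \<and>
     transpose_mat Q * Q = 1\<^sub>m n \<and> Q * transpose_mat Q = 1\<^sub>m n \<and> A = Q * D * transpose_mat Q"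
  using assms
proof (induct n arbitrary: A)
  case 0
  show ?case
    by (rule exI[of _ "1\<^sub>m 0"], rule exI[of _ A]) (use 0 in \<open>auto simp: diagonal_mat_def\<close>)
next
  case (Suc m A)
  let ?n = "Suc m"
  have A: "A \<in> carrier_mat ?n ?n" and sym: "transpose_mat A = A" by fact+
  obtain e where "poly (char_poly A) e = 0" using sym_real_eigenvalue[OF A sym] by auto
  hence "eigenvalue A e" using eigenvalue_root_char_poly[OF A] by simp
  then obtain u where "eigenvector A u e" unfolding eigenvalue_def by blast
  hence u: "u \<in> carrier_vec ?n" "u \<noteq> 0\<^sub>v ?n" and Au: "A *\<^sub>v u = e \<cdot>\<^sub>v u"
    using A unfolding eigenvector_def by auto
  have upos: "u \<bullet> u > 0"
  proof -
    have "u \<bullet> u \<noteq> 0" using u conjugate_square_eq_0_vec[OF u(1)] by auto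
    thus ?thesis using real_sprod_self_ge0[of u] by linarith
  qed
  define v where "v = (1 / sqrt (u \<bullet> u)) \<cdot>\<^sub>v u"
  have v: "v \<in> carrier_vec ?n" using u by (simp add: v_def)
  have vv: "v \<bullet> v = 1" using upos u
    by (simp add: v_def real_sqrt_mult[symmetric])
  have Av: "A *\<^sub>v v = e \<cdot>\<^sub>v v" using Au u A
    by (simp add: v_def mult_mat_vec smult_smult_assoc mult.commute)
  obtain ws where ws: "set ws \<subseteq> carrier_vec ?n" "length ws = ?n" "ws ! 0 = v"
    "\<And>i j. i < ?n \<Longrightarrow> j < ?n \<Longrightarrow> ws ! i \<bullet> ws ! j = (if i = j then 1 else 0)"
    using orthonormal_exists[OF v vv] by blast
  have wsi: "ws ! i \<in> carrier_vec ?n" if "i < ?n" for i using ws that by auto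
  define W where "W = mat_of_cols ?n ws"
  have W: "W \<in> carrier_mat ?n ?n" using ws mat_of_cols_carrier(1)[of ?n ws] by (simp add: W_def)
  have colW: "col W j = ws ! j" if "j < ?n" for j
    using that ws wsi[OF that] by (simp add: W_def)
  have WtW: "transpose_mat W * W = 1\<^sub>m ?n"
    by (rule eq_matI) (use W in \<open>auto simp: colW ws(4)\<close>)
  have WWt: "W * transpose_mat W = 1\<^sub>m ?n"
    using mat_mult_left_right_inverse[OF _ W WtW] W by simp
  define A' where "A' = transpose_mat W * A * W"
  have A': "A' \<in> carrier_mat ?n ?n" using A W by (simp add: A'_def)
  have A'sym: "transpose_mat A' = A'"
  proof -
    have WA: "transpose_mat W * A \<in> carrier_mat ?n ?n" using W A by simp
    have "transpose_mat A' = transpose_mat W * transpose_mat (transpose_mat W * A)"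
      unfolding A'_def using transpose_mult[OF WA W] by simp
    also have "transpose_mat (transpose_mat W * A) = transpose_mat A * W"
      using transpose_mult[of "transpose_mat W" ?n ?n A ?n] W A by simp
    finally show ?thesis using sym W A unfolding A'_def
      by (simp add: assoc_mult_mat[of _ ?n ?n _ ?n _ ?n])
  qed
  have A'ij: "A' $$ (i,j) = ws ! i \<bullet> (A *\<^sub>v ws ! j)" if "i < ?n" "j < ?n" for i j
  proof -
    have "A' = transpose_mat W * (A * W)" using A W by (simp add: A'_def)
    hence "A' $$ (i,j) = row (transpose_mat W) i \<bullet> col (A * W) j" using that A W by simp
    also have "row (transpose_mat W) i = ws ! i" using colW that W by simp
    also have "col (A * W) j = A *\<^sub>v ws ! j" using col_mult2[OF A W, of j] colW that by simp
    finally show ?thesis .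
  qed
  have A'col0: "A' $$ (i,0) = (if i = 0 then e else 0)" if "i < ?n" for i
    using A'ij[OF that, of 0] Av ws(3) ws(4)[OF that, of 0] wsi[OF that] v by simp
  have A'row0: "A' $$ (0,j) = (if j = 0 then e else 0)" if "j < ?n" for j
  proof -
    have "A' $$ (0,j) = transpose_mat A' $$ (j, 0)" using A' that by simp
    thus ?thesis using A'sym A'col0[OF that] by simp
  qed
  define A3 where "A3 = mat m m (\<lambda>(i,j). A' $$ (Suc i, Suc j))"
  define A1 :: "real mat" where "A1 = mat 1 1 (\<lambda>_. e)"
  have A3: "A3 \<in> carrier_mat m m" by (simp add: A3_def)
  have A3sym: "transpose_mat A3 = A3"
  proof (rule eq_matI)
    fix i j assume "i < dim_row A3" "j < dim_col A3"
    hence ij: "i < m" "j < m" by (auto simp: A3_def)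
    have "A' $$ (Suc j, Suc i) = transpose_mat A' $$ (Suc i, Suc j)" using A' ij by simp
    thus "transpose_mat A3 $$ (i, j) = A3 $$ (i, j)" using ij A'sym by (simp add: A3_def)
  qed (auto simp: A3_def)
  have A'block: "A' = four_block_mat A1 (0\<^sub>m 1 m) (0\<^sub>m m 1) A3"
  proof (rule eq_matI)
    fix i j assume "i < dim_row (four_block_mat A1 (0\<^sub>m 1 m) (0\<^sub>m m 1) A3)"
      "j < dim_col (four_block_mat A1 (0\<^sub>m 1 m) (0\<^sub>m m 1) A3)"
    hence ij: "i < ?n" "j < ?n" by (auto simp: A1_def A3_def)
    show "A' $$ (i, j) = four_block_mat A1 (0\<^sub>m 1 m) (0\<^sub>m m 1) A3 $$ (i, j)"
      using ij A'col0 A'row0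
      by (cases i; cases j) (auto simp: A1_def A3_def)
  qed (use A' in \<open>auto simp: A1_def A3_def\<close>)
  obtain Q3 D3 where Q3: "Q3 \<in> carrier_mat m m" and D3: "D3 \<in> carrier_mat m m"
    and dD3: "diagonal_mat D3" and Q3o: "transpose_mat Q3 * Q3 = 1\<^sub>m m" "Q3 * transpose_mat Q3 = 1\<^sub>m m"
    and A3eq: "A3 = Q3 * D3 * transpose_mat Q3"
    using Suc(1)[OF A3 A3sym] by blast
  define R where "R = four_block_mat (1\<^sub>m 1) (0\<^sub>m 1 m) (0\<^sub>m m 1) Q3"
  define D where "D = four_block_mat A1 (0\<^sub>m 1 m) (0\<^sub>m m 1) D3"
  have A1: "A1 \<in> carrier_mat 1 1" by (simp add: A1_def)
  have R: "R \<in> carrier_mat ?n ?n" using four_block_carrier_mat[OF one_carrier_mat[of 1] Q3]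
    by (simp add: R_def)
  have D: "D \<in> carrier_mat ?n ?n" using four_block_carrier_mat[OF A1 D3] by (simp add: D_def)
  have Rt: "transpose_mat R = four_block_mat (1\<^sub>m 1) (0\<^sub>m 1 m) (0\<^sub>m m 1) (transpose_mat Q3)"
    unfolding R_def using Q3 by (subst transpose_four_block_mat) auto
  have RtR: "transpose_mat R * R = 1\<^sub>m ?n"
    unfolding Rt unfolding R_def using Q3 Q3o
    by (subst mult_four_block_mat[of _ 1 1 _ m _ m _ _ 1 _ m]) auto
  have RRt: "R * transpose_mat R = 1\<^sub>m ?n"
    unfolding Rt unfolding R_def using Q3 Q3o
    by (subst mult_four_block_mat[of _ 1 1 _ m _ m _ _ 1 _ m]) auto
  have A'RDR: "A' = R * D * transpose_mat R"
  proof -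
    have RD: "R * D = four_block_mat A1 (0\<^sub>m 1 m) (0\<^sub>m m 1) (Q3 * D3)"
      unfolding R_def D_def using Q3 D3 A1
      by (subst mult_four_block_mat[of _ 1 1 _ m _ m _ _ 1 _ m]) auto
    have "R * D * transpose_mat R = four_block_mat A1 (0\<^sub>m 1 m) (0\<^sub>m m 1) (Q3 * D3 * transpose_mat Q3)"
      unfolding Rt RD using Q3 D3 A1
      by (subst mult_four_block_mat[of _ 1 1 _ m _ m _ _ 1 _ m]) auto
    thus ?thesis using A'block A3eq by simp
  qed
  define Q where "Q = W * R"
  have Q: "Q \<in> carrier_mat ?n ?n" using W R by (simp add: Q_def)
  have Qt: "transpose_mat Q = transpose_mat R * transpose_mat W"
    using W R by (simp add: Q_def transpose_mult[of _ ?n ?n])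
  have QtQ: "transpose_mat Q * Q = 1\<^sub>m ?n"
  proof -
    have "transpose_mat Q * Q = transpose_mat R * (transpose_mat W * W) * R"
      unfolding Qt unfolding Q_def using W R by (simp add: assoc_mult_mat[of _ ?n ?n _ ?n _ ?n])
    thus ?thesis using WtW RtR R by simp
  qed
  have QQt: "Q * transpose_mat Q = 1\<^sub>m ?n"
  proof -
    have "Q * transpose_mat Q = W * (R * transpose_mat R) * transpose_mat W"
      unfolding Qt unfolding Q_def using W R by (simp add: assoc_mult_mat[of _ ?n ?n _ ?n _ ?n])
    thus ?thesis using WWt RRt W by simp
  qed
  have "A = W * A' * transpose_mat W"
  proof -
    have "W * A' * transpose_mat W = (W * transpose_mat W) * A * (W * transpose_mat W)"
      unfolding A'_def using W A by (simp add: assoc_mult_mat[of _ ?n ?n _ ?n _ ?n])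
    thus ?thesis using WWt A by simp
  qed
  also have "\<dots> = Q * D * transpose_mat Q"
    unfolding A'RDR Qt unfolding Q_def using W R D by (simp add: assoc_mult_mat[of _ ?n ?n _ ?n _ ?n])
  finally have AQ: "A = Q * D * transpose_mat Q" .
  have dD: "diagonal_mat D"
    unfolding diagonal_mat_def
  proof (intro allI impI)
    fix i j assume ij: "i < dim_row D" "j < dim_col D" "i \<noteq> j"
    thus "D $$ (i, j) = 0" using dD3 D3 unfolding diagonal_mat_def
      by (cases i; cases j) (auto simp: D_def A1_def)
  qed
  show ?case using Q D dD QtQ QQt AQ by blast
qed

lemma proots_lin_prod: "proots (\<Prod>a\<leftarrow>xs. [:- a, 1:]) = mset (xs :: real list)"
proof (induct xs)
  case (Cons a xs)
  have "0 \<notin> set (map (\<lambda>a. [:- a, 1::real:]) xs)" by auto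
  hence nz: "(\<Prod>a\<leftarrow>xs. [:- a, 1::real:]) \<noteq> 0"
    by (metis prod_list_zero_iff)
  have "proots [:- a, 1:] = {#a#}" using proots_linear_factor[of "-a"] by simp
  moreover have "proots ([:- a, 1:] * (\<Prod>a\<leftarrow>xs. [:- a, 1::real:])) = proots [:- a, 1:] + proots (\<Prod>a\<leftarrow>xs. [:- a, 1::real:])"
    by (rule proots_mult) (use nz in auto)
  ultimately show ?case using Cons by simp
qed simp

lemma spectral_diag:
  fixes A :: "real mat"
  assumes A: "A \<in> carrier_mat n n" and sym: "transpose_mat A = A"
  shows "\<exists>Q d. Q \<in> carrier_mat n n \<and>
    (\<forall>x \<in> carrier_vec n. x \<bullet> (A *\<^sub>v x) = (\<Sum>i<n. d i * ((transpose_mat Q *\<^sub>v x) $ i)^2)) \<and>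
    (\<forall>x \<in> carrier_vec n. (transpose_mat Q *\<^sub>v x) \<bullet> (transpose_mat Q *\<^sub>v x) = x \<bullet> x) \<and>
    sorted_list_of_multiset (proots (char_poly A)) = sort (map d [0..<n])"
proof -
  obtain Q D where Q: "Q \<in> carrier_mat n n" and D: "D \<in> carrier_mat n n" and dD: "diagonal_mat D"
    and QtQ: "transpose_mat Q * Q = 1\<^sub>m n" and QQt: "Q * transpose_mat Q = 1\<^sub>m n"
    and AQ: "A = Q * D * transpose_mat Q"
    using spectral[OF A sym] by blast
  define d where "d i = D $$ (i,i)" for i
  have Qt: "transpose_mat Q \<in> carrier_mat n n" using Q by simp
  have "similar_mat A D"
    by (rule similar_matI[of A D Q "transpose_mat Q" n]) (use A D Q QQt QtQ AQ in auto)
  hence "char_poly A = char_poly D" by (rule char_poly_similar)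
  also have "upper_triangular D" using dD D unfolding diagonal_mat_def upper_triangular_def by auto
  hence "char_poly D = (\<Prod>a\<leftarrow>diag_mat D. [:- a, 1:])" using char_poly_upper_triangular[OF D] by simp
  also have "diag_mat D = map d [0..<n]" using D by (simp add: diag_mat_def d_def)
  finally have "char_poly A = (\<Prod>a\<leftarrow>map d [0..<n]. [:- a, 1:])" .
  hence cp: "sorted_list_of_multiset (proots (char_poly A)) = sort (map d [0..<n])"
    by (simp only: proots_lin_prod sorted_list_of_multiset_mset)
  have quad: "x \<bullet> (A *\<^sub>v x) = (\<Sum>i<n. d i * ((transpose_mat Q *\<^sub>v x) $ i)^2)"
    if x: "x \<in> carrier_vec n" for x
  proof -
    define y where "y = transpose_mat Q *\<^sub>v x"
    have y: "y \<in> carrier_vec n" using Qt x by (simp add: y_def)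
    have "A *\<^sub>v x = Q *\<^sub>v (D *\<^sub>v y)" unfolding AQ y_def using Q D x
      by (simp add: assoc_mult_mat_vec[of _ n n _ n])
    hence "x \<bullet> (A *\<^sub>v x) = y \<bullet> (D *\<^sub>v y)"
      unfolding y_def using transpose_vec_mult_scalar[OF Q _ x, of "D *\<^sub>v (transpose_mat Q *\<^sub>v x)"] D Qt x
      by simp
    also have "D *\<^sub>v y = vec n (\<lambda>i. d i * y $ i)"
    proof (rule eq_vecI)
      fix i assume "i < dim_vec (vec n (\<lambda>i. d i * y $ i))"
      hence i: "i < n" by simp
      have "(D *\<^sub>v y) $ i = (\<Sum>j\<in>{0..<n}. D $$ (i,j) * y $ j)"
        using i D y by (simp add: scalar_prod_def)
      also have "\<dots> = (\<Sum>j\<in>{0..<n}. (if j = i then d i * y $ j else 0))"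
        by (intro sum.cong refl) (use dD D i in \<open>auto simp: diagonal_mat_def d_def\<close>)
      also have "\<dots> = d i * y $ i" using i by simp
      finally show "(D *\<^sub>v y) $ i = vec n (\<lambda>i. d i * y $ i) $ i" using i by simp
    qed (use D in auto)
    also have "y \<bullet> vec n (\<lambda>i. d i * y $ i) = (\<Sum>i<n. d i * (y $ i)^2)"
      unfolding scalar_prod_def by (intro sum.cong) (auto simp: power2_eq_square)
    finally show ?thesis unfolding y_def .
  qed
  have norm: "(transpose_mat Q *\<^sub>v x) \<bullet> (transpose_mat Q *\<^sub>v x) = x \<bullet> x" if x: "x \<in> carrier_vec n" for x
  proof -
    have "(transpose_mat Q *\<^sub>v x) \<bullet> (transpose_mat Q *\<^sub>v x) = x \<bullet> (Q *\<^sub>v (transpose_mat Q *\<^sub>v x))"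
      using transpose_vec_mult_scalar[OF Q _ x, of "transpose_mat Q *\<^sub>v x"] Qt x by simp
    also have "Q *\<^sub>v (transpose_mat Q *\<^sub>v x) = x" using Q Qt x QQt
      by (simp add: assoc_mult_mat_vec[symmetric, of _ n n _ n])
    finally show ?thesis .
  qed
  show ?thesis using Q quad norm cp by blast
qed

lemma sort_last_ge:
  fixes xs :: "real list"
  assumes "i < length xs"
  shows "xs ! i \<le> sort xs ! (length xs - 1)"
proof -
  have "xs ! i \<in> set (sort xs)" using assms by simp
  then obtain j where j: "j < length xs" "sort xs ! j = xs ! i"
    by (metis in_set_conv_nth length_sort)
  have "sort xs ! j \<le> sort xs ! (length xs - 1)"
    by (rule sorted_nth_mono) (use j in auto)
  thus ?thesis using j by simp
qed

lemma sort_second_le: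
  fixes xs :: "real list"
  assumes i: "i < length xs" and k: "k < length xs" and ik: "i \<noteq> k"
  shows "sort xs ! 1 \<le> max (xs ! i) (xs ! k)"
proof (rule ccontr)
  define m where "m = max (xs ! i) (xs ! k)"
  define ys where "ys = sort xs"
  assume "\<not> sort xs ! 1 \<le> max (xs ! i) (xs ! k)"
  hence gt: "ys ! 1 > m" unfolding ys_def m_def by (simp add: not_le)
  have len: "length ys = length xs" by (simp add: ys_def)
  have sy: "sorted ys" by (simp add: ys_def)
  have sub: "{j. j < length ys \<and> ys ! j \<le> m} \<subseteq> {0}"
  proof
    fix j assume j: "j \<in> {j. j < length ys \<and> ys ! j \<le> m}"
    show "j \<in> {0}"
    proof (rule ccontr)
      assume "j \<notin> {0}"
      hence "1 \<le> j" by simp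
      hence "ys ! 1 \<le> ys ! j" using sy j by (intro sorted_nth_mono) auto
      thus False using gt j by simp
    qed
  qed
  have "card {j. j < length ys \<and> ys ! j \<le> m} \<le> 1"
    using card_mono[OF _ sub] by simp
  moreover have "length (filter (\<lambda>y. y \<le> m) ys) = length (filter (\<lambda>y. y \<le> m) xs)"
  proof -
    have "mset (filter (\<lambda>y. y \<le> m) ys) = mset (filter (\<lambda>y. y \<le> m) xs)"
      by (simp add: ys_def)
    thus ?thesis by (metis size_mset)
  qed
  moreover have "{i, k} \<subseteq> {j. j < length xs \<and> xs ! j \<le> m}" using i k by (auto simp: m_def)
  hence "card {i, k} \<le> card {j. j < length xs \<and> xs ! j \<le> m}" by (intro card_mono) auto
  hence "2 \<le> card {j. j < length xs \<and> xs ! j \<le> m}" using ik by simp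
  ultimately show False by (simp add: length_filter_conv_card)
qed


lemma sum_sq_eq: "(y :: real vec) \<in> carrier_vec n \<Longrightarrow> y \<bullet> y = (\<Sum>i<n. (y $ i)^2)"
  unfolding scalar_prod_def by (auto simp: power2_eq_square atLeast0LessThan)

lemma rayleigh_max:
  fixes A :: "real mat"
  assumes A: "A \<in> carrier_mat n n" and sym: "transpose_mat A = A" and n: "n > 0"
    and x: "x \<in> carrier_vec n"
  shows "x \<bullet> (A *\<^sub>v x) \<le> eigval A n * (x \<bullet> x)"
proof -
  obtain Q d where Q: "Q \<in> carrier_mat n n" and
    quad: "\<And>x. x \<in> carrier_vec n \<Longrightarrow> x \<bullet> (A *\<^sub>v x) = (\<Sum>i<n. d i * ((transpose_mat Q *\<^sub>v x) $ i)^2)" and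
    norm: "\<And>x. x \<in> carrier_vec n \<Longrightarrow> (transpose_mat Q *\<^sub>v x) \<bullet> (transpose_mat Q *\<^sub>v x) = x \<bullet> x" and
    cp: "sorted_list_of_multiset (proots (char_poly A)) = sort (map d [0..<n])"
    using spectral_diag[OF A sym] by blast
  define M where "M = eigval A n"
  have M: "M = sort (map d [0..<n]) ! (n - 1)" unfolding M_def eigval_def cp ..
  have dM: "d i \<le> M" if "i < n" for i
    using sort_last_ge[of i "map d [0..<n]"] that by (simp add: M)
  define y where "y = transpose_mat Q *\<^sub>v x"
  have y: "y \<in> carrier_vec n" using Q x by (simp add: y_def)
  have "x \<bullet> (A *\<^sub>v x) = (\<Sum>i<n. d i * (y $ i)^2)" using quad[OF x] by (simp add: y_def)
  also have "\<dots> \<le> (\<Sum>i<n. M * (y $ i)^2)"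
    by (intro sum_mono mult_right_mono) (auto simp: dM)
  also have "\<dots> = M * (y \<bullet> y)" using sum_sq_eq[OF y] by (simp add: sum_distrib_left)
  also have "y \<bullet> y = x \<bullet> x" using norm[OF x] by (simp add: y_def)
  finally show ?thesis by (simp add: M_def)
qed

lemma rayleigh_second:
  fixes A :: "real mat"
  assumes A: "A \<in> carrier_mat n n" and sym: "transpose_mat A = A" and n: "n \<ge> 2"
    and J: "J \<in> carrier_vec n"
    and psd: "\<And>x. x \<in> carrier_vec n \<Longrightarrow> x \<bullet> (A *\<^sub>v x) \<ge> 0"
    and shift: "\<And>x a b. x \<in> carrier_vec n \<Longrightarrow>
       (a \<cdot>\<^sub>v J + b \<cdot>\<^sub>v x) \<bullet> (A *\<^sub>v (a \<cdot>\<^sub>v J + b \<cdot>\<^sub>v x)) = b^2 * (x \<bullet> (A *\<^sub>v x))"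
    and x: "x \<in> carrier_vec n" and xJ: "x \<bullet> J = 0" and JJpos: "J \<bullet> J > 0"
  shows "eigval A 2 * (x \<bullet> x) \<le> x \<bullet> (A *\<^sub>v x)"
proof -
  obtain Q d where Q: "Q \<in> carrier_mat n n" and
    quad: "\<And>x. x \<in> carrier_vec n \<Longrightarrow> x \<bullet> (A *\<^sub>v x) = (\<Sum>i<n. d i * ((transpose_mat Q *\<^sub>v x) $ i)^2)" and
    norm: "\<And>x. x \<in> carrier_vec n \<Longrightarrow> (transpose_mat Q *\<^sub>v x) \<bullet> (transpose_mat Q *\<^sub>v x) = x \<bullet> x" and
    cp: "sorted_list_of_multiset (proots (char_poly A)) = sort (map d [0..<n])"
    using spectral_diag[OF A sym] by blast
  define l where "l = eigval A 2"
  have l: "l = sort (map d [0..<n]) ! 1" unfolding l_def eigval_def cp by simp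
  obtain k where k: "k < n" and kmin: "\<And>i. i < n \<Longrightarrow> d k \<le> d i"
  proof -
    have "0 \<in> {..<n}" using n by simp
    hence "finite (d ` {..<n})" "d ` {..<n} \<noteq> {}" by auto
    hence "Min (d ` {..<n}) \<in> d ` {..<n}" by (rule Min_in)
    then obtain k where "k < n" "d k = Min (d ` {..<n})" by auto
    thus ?thesis using that by (metis Min_le finite_imageI finite_lessThan image_eqI lessThan_iff)
  qed
  have dl: "l \<le> d i" if "i < n" "i \<noteq> k" for i
  proof -
    have "l \<le> max (d i) (d k)" using sort_second_le[of i "map d [0..<n]" k] that k by (simp add: l)
    thus ?thesis using kmin[OF that(1)] by simp
  qed
  have yk: "(transpose_mat Q *\<^sub>v w) $ k = col Q k \<bullet> w" if "w \<in> carrier_vec n" for w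
    using Q k that by simp
  have key: "l * (w \<bullet> w) \<le> w \<bullet> (A *\<^sub>v w)" if w: "w \<in> carrier_vec n" and wk: "col Q k \<bullet> w = 0" for w
  proof -
    define y where "y = transpose_mat Q *\<^sub>v w"
    have y: "y \<in> carrier_vec n" using Q w by (simp add: y_def)
    have y0: "y $ k = 0" using yk[OF w] wk by (simp add: y_def)
    have "l * (w \<bullet> w) = l * (y \<bullet> y)" using norm[OF w] by (simp add: y_def)
    also have "\<dots> = (\<Sum>i<n. l * (y $ i)^2)" using sum_sq_eq[OF y] by (simp add: sum_distrib_left)
    also have "\<dots> \<le> (\<Sum>i<n. d i * (y $ i)^2)"
    proof (intro sum_mono)
      fix i assume "i \<in> {..<n}"
      thus "l * (y $ i)^2 \<le> d i * (y $ i)^2"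
        using dl[of i] y0 by (cases "i = k") (auto intro: mult_right_mono)
    qed
    also have "\<dots> = w \<bullet> (A *\<^sub>v w)" using quad[OF w] by (simp add: y_def)
    finally show ?thesis .
  qed
  have lneg: "l * (x \<bullet> x) \<le> x \<bullet> (A *\<^sub>v x)" if "l \<le> 0"
  proof -
    have "l * (x \<bullet> x) \<le> 0" using that real_sprod_self_ge0[of x] by (simp add: mult_nonpos_nonneg)
    thus ?thesis using psd[OF x] by simp
  qed
  define c where "c = col Q k \<bullet> J"
  define g where "g = col Q k \<bullet> x"
  show ?thesis
  proof (cases "c = 0")
    case True
    define w where "w = 1 \<cdot>\<^sub>v J + 0 \<cdot>\<^sub>v x"
    have w: "w \<in> carrier_vec n" using J x by (simp add: w_def)
    have wJ: "w = J" using J x unfolding w_def by (intro eq_vecI) auto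
    have "w \<bullet> (A *\<^sub>v w) = 0" unfolding w_def using shift[OF x, of 1 0] by simp
    moreover have "col Q k \<bullet> w = 0" using True wJ c_def by simp
    ultimately have "l * (J \<bullet> J) \<le> 0" using key[OF w] wJ by simp
    hence "l \<le> 0" using JJpos by (simp add: mult_le_0_iff)
    thus ?thesis using lneg by (simp add: l_def)
  next
    case False
    define a where "a = g"
    define b where "b = - c"
    have b: "b \<noteq> 0" using False by (simp add: b_def)
    have wk: "col Q k \<bullet> (a \<cdot>\<^sub>v J + b \<cdot>\<^sub>v x) = 0"
      using Q J x k unfolding c_def g_def a_def b_def
      by (simp add: scalar_prod_add_distrib[of _ n])
    define w where "w = a \<cdot>\<^sub>v J + b \<cdot>\<^sub>v x"
    have w: "w \<in> carrier_vec n" using J x by (simp add: w_def)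
    have ww: "w \<bullet> w = a^2 * (J \<bullet> J) + b^2 * (x \<bullet> x)"
    proof -
      have "w \<bullet> w = (\<Sum>i<n. (a * J $ i + b * x $ i)^2)" using sum_sq_eq[OF w] J x by (simp add: w_def)
      also have "\<dots> = (\<Sum>i<n. a^2 * (J $ i)^2 + b^2 * (x $ i)^2 + 2 * a * b * (x $ i * J $ i))"
      proof (intro sum.cong refl)
        have sq: "\<And>p q r t::real. (p*q + r*t)^2 = p^2*q^2 + r^2*t^2 + 2*p*r*(t*q)"
          by (simp add: power2_eq_square algebra_simps)
        fix i show "(a * J $ i + b * x $ i)^2 = a^2 * (J $ i)^2 + b^2 * (x $ i)^2 + 2 * a * b * (x $ i * J $ i)"
          by (rule sq)
      qed
      also have "\<dots> = a^2 * (\<Sum>i<n. (J $ i)^2) + b^2 * (\<Sum>i<n. (x $ i)^2) + 2 * a * b * (\<Sum>i<n. x $ i * J $ i)"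
        by (simp only: sum.distrib sum_distrib_left)
      also have "(\<Sum>i<n. x $ i * J $ i) = x \<bullet> J" using J unfolding scalar_prod_def by (simp add: atLeast0LessThan)
      finally show ?thesis using sum_sq_eq[OF J] sum_sq_eq[OF x] xJ by simp
    qed
    have JJ: "J \<bullet> J \<ge> 0" using real_sprod_self_ge0 .
    have wAw: "w \<bullet> (A *\<^sub>v w) = b^2 * (x \<bullet> (A *\<^sub>v x))" unfolding w_def by (rule shift[OF x])
    have k1: "l * (w \<bullet> w) \<le> b^2 * (x \<bullet> (A *\<^sub>v x))" using key[OF w] wk wAw by (simp add: w_def)
    have b2: "b^2 > 0" using b by simp
    show ?thesis
    proof (cases "l \<le> 0")
      case True
      thus ?thesis using lneg by (simp add: l_def)
    next
      case False
      have "l * (b^2 * (x \<bullet> x)) \<le> l * (w \<bullet> w)"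
        using False ww JJ by (intro mult_left_mono) auto
      with k1 have "b^2 * (l * (x \<bullet> x)) \<le> b^2 * (x \<bullet> (A *\<^sub>v x))" by (simp add: algebra_simps)
      thus ?thesis using b2 by (simp add: l_def)
    qed
  qed
qed

lemma lap_carrier: "hlaplacian n E \<in> carrier_mat n n"
  by (simp add: hlaplacian_def)

lemma lap_sym: "transpose_mat (hlaplacian n E) = hlaplacian n E"
  by (rule eq_matI) (auto simp: hlaplacian_def conj_commute)

lemma alg1: "(K::real) - 1 > 0 \<Longrightarrow> (- (1 / (K - 1))) * P + (1 + 1 / (K - 1)) * Q = (K * Q - P) / (K - 1)"
  by (simp add: divide_simps)

lemma edge_form:
  fixes x :: "real vec" and e :: "nat set"
  assumes e: "e \<subseteq> {0..<n}" and ce: "card e \<ge> 2"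
  shows "(\<Sum>i<n. \<Sum>j<n. x $ i * x $ j * (if i \<in> e \<and> j \<in> e then (if i = j then 1 else - (1 / (real (card e) - 1))) else 0))
    = (real (card e) * (\<Sum>i\<in>e. (x $ i)^2) - (\<Sum>i\<in>e. x $ i)^2) / (real (card e) - 1)"
proof -
  define c where "c = 1 / (real (card e) - 1)"
  have fin: "finite e" using e finite_subset by blast
  have K: "real (card e) - 1 > 0" using ce by simp
  have "(\<Sum>i<n. \<Sum>j<n. x $ i * x $ j * (if i \<in> e \<and> j \<in> e then (if i = j then 1 else - c) else 0))
      = (\<Sum>i\<in>e. \<Sum>j\<in>e. x $ i * x $ j * (if i = j then 1 else - c))"
  proof -
    have "\<And>i. (\<Sum>j<n. x $ i * x $ j * (if i \<in> e \<and> j \<in> e then (if i = j then 1 else - c) else 0))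
       = (if i \<in> e then (\<Sum>j\<in>e. x $ i * x $ j * (if i = j then 1 else - c)) else 0)"
    proof -
      fix i
      have "(\<Sum>j<n. x $ i * x $ j * (if i \<in> e \<and> j \<in> e then (if i = j then 1 else - c) else 0))
        = (\<Sum>j\<in>{..<n}. if j \<in> e then x $ i * x $ j * (if i \<in> e then (if i = j then 1 else - c) else 0) else 0)"
        by (intro sum.cong refl) auto
      also have "\<dots> = (\<Sum>j\<in>{..<n} \<inter> e. x $ i * x $ j * (if i \<in> e then (if i = j then 1 else - c) else 0))"
        by (rule sum.inter_restrict[symmetric]) simp
      also have "{..<n} \<inter> e = e" using e by auto
      finally show "(\<Sum>j<n. x $ i * x $ j * (if i \<in> e \<and> j \<in> e then (if i = j then 1 else - c) else 0))
       = (if i \<in> e then (\<Sum>j\<in>e. x $ i * x $ j * (if i = j then 1 else - c)) else 0)"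
        by auto
    qed
    hence "(\<Sum>i<n. \<Sum>j<n. x $ i * x $ j * (if i \<in> e \<and> j \<in> e then (if i = j then 1 else - c) else 0))
      = (\<Sum>i\<in>{..<n}. if i \<in> e then (\<Sum>j\<in>e. x $ i * x $ j * (if i = j then 1 else - c)) else 0)"
      by simp
    also have "\<dots> = (\<Sum>i\<in>{..<n} \<inter> e. (\<Sum>j\<in>e. x $ i * x $ j * (if i = j then 1 else - c)))"
      by (rule sum.inter_restrict[symmetric]) simp
    also have "{..<n} \<inter> e = e" using e by auto
    finally show ?thesis .
  qed
  also have "\<dots> = (\<Sum>i\<in>e. \<Sum>j\<in>e. (- c) * (x $ i * x $ j) + (if i = j then (1 + c) * (x $ i)^2 else 0))"
    by (intro sum.cong refl) (auto simp: power2_eq_square algebra_simps)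
  also have "\<dots> = (\<Sum>i\<in>e. (- c) * (x $ i * (\<Sum>j\<in>e. x $ j)) + (1 + c) * (x $ i)^2)"
  proof (intro sum.cong refl)
    fix i assume i: "i \<in> e"
    have "(\<Sum>j\<in>e. (- c) * (x $ i * x $ j) + (if i = j then (1 + c) * (x $ i)^2 else 0))
      = (\<Sum>j\<in>e. (- c) * (x $ i * x $ j)) + (\<Sum>j\<in>e. (if i = j then (1 + c) * (x $ i)^2 else 0))"
      by (rule sum.distrib)
    also have "(\<Sum>j\<in>e. (if i = j then (1 + c) * (x $ i)^2 else 0)) = (1 + c) * (x $ i)^2"
      using i fin by simp
    also have "(\<Sum>j\<in>e. (- c) * (x $ i * x $ j)) = (- c) * (x $ i * (\<Sum>j\<in>e. x $ j))"
      by (simp add: sum_distrib_left)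
    finally show "(\<Sum>j\<in>e. (- c) * (x $ i * x $ j) + (if i = j then (1 + c) * (x $ i)^2 else 0))
      = (- c) * (x $ i * (\<Sum>j\<in>e. x $ j)) + (1 + c) * (x $ i)^2" .
  qed
  also have "\<dots> = (- c) * (\<Sum>i\<in>e. x $ i)^2 + (1 + c) * (\<Sum>i\<in>e. (x $ i)^2)"
  proof -
    define S where "S = (\<Sum>j\<in>e. x $ j)"
    have "(\<Sum>i\<in>e. (- c) * (x $ i * S) + (1 + c) * (x $ i)^2)
       = (\<Sum>i\<in>e. (- c) * S * x $ i) + (\<Sum>i\<in>e. (1 + c) * (x $ i)^2)"
      by (subst sum.distrib[symmetric]) (intro sum.cong refl, simp add: mult_ac)
    also have "\<dots> = (- c) * S * S + (1 + c) * (\<Sum>i\<in>e. (x $ i)^2)"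
      by (simp only: sum_distrib_left[symmetric] S_def)
    finally show ?thesis by (simp add: S_def power2_eq_square)
  qed
  also have "\<dots> = (real (card e) * (\<Sum>i\<in>e. (x $ i)^2) - (\<Sum>i\<in>e. x $ i)^2) / (real (card e) - 1)"
    using K unfolding c_def by (rule alg1)
  finally show ?thesis unfolding c_def .
qed

lemma hyp_finite: "hypergraph n E \<Longrightarrow> finite E"
  unfolding hypergraph_def by (rule finite_subset[of _ "Pow {0..<n}"]) auto

lemma lap_entry:
  assumes fin: "finite E" and ij: "i < n" "j < n"
  shows "hlaplacian n E $$ (i,j) = (\<Sum>e\<in>E. (if i \<in> e \<and> j \<in> e then (if i = j then 1 else - (1 / (real (card e) - 1))) else 0))"
proof (cases "i = j")
  case True
  have "real (hdegree E i) = (\<Sum>e\<in>{e\<in>E. i \<in> e}. 1)" by (simp add: hdegree_def)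
  also have "\<dots> = (\<Sum>e\<in>E. if i \<in> e then 1 else 0)" using fin by (rule sum.inter_filter)
  also have "\<dots> = (\<Sum>e\<in>E. (if i \<in> e \<and> j \<in> e then (if i = j then 1 else - (1 / (real (card e) - 1))) else 0))"
    unfolding True by (intro sum.cong refl) simp
  finally show ?thesis using True ij by (simp add: hlaplacian_def)
next
  case False
  have "- (\<Sum>e\<in>{e\<in>E. i \<in> e \<and> j \<in> e}. 1 / (real (card e) - 1))
     = (\<Sum>e\<in>{e\<in>E. i \<in> e \<and> j \<in> e}. - (1 / (real (card e) - 1)))" by (simp add: sum_negf)
  also have "\<dots> = (\<Sum>e\<in>E. if i \<in> e \<and> j \<in> e then - (1 / (real (card e) - 1)) else 0)"
    using fin by (rule sum.inter_filter)
  also have "\<dots> = (\<Sum>e\<in>E. (if i \<in> e \<and> j \<in> e then (if i = j then 1 else - (1 / (real (card e) - 1))) else 0))"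
    using False by (intro sum.cong refl) simp
  finally show ?thesis using False ij by (simp add: hlaplacian_def)
qed

definition qe :: "nat set \<Rightarrow> real vec \<Rightarrow> real" where
  "qe e x = (real (card e) * (\<Sum>i\<in>e. (x $ i)^2) - (\<Sum>i\<in>e. x $ i)^2) / (real (card e) - 1)"

lemma lap_quad:
  assumes hg: "hypergraph n E" and x: "x \<in> carrier_vec n"
  shows "x \<bullet> (hlaplacian n E *\<^sub>v x) = (\<Sum>e\<in>E. qe e x)"
proof -
  have fin: "finite E" using hyp_finite[OF hg] .
  define f :: "nat set \<Rightarrow> nat \<Rightarrow> nat \<Rightarrow> real" where "f e i j = (if i \<in> e \<and> j \<in> e then (if i = j then 1 else - (1 / (real (card e) - 1))) else 0)" for e i j
  let ?L = "hlaplacian n E"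
  have "x \<bullet> (?L *\<^sub>v x) = (\<Sum>i<n. x $ i * (\<Sum>j<n. ?L $$ (i,j) * x $ j))"
    unfolding scalar_prod_def using x lap_carrier[of n E]
    by (intro sum.cong) (auto simp: scalar_prod_def atLeast0LessThan)
  also have "\<dots> = (\<Sum>i<n. \<Sum>j<n. \<Sum>e\<in>E. x $ i * x $ j * f e i j)"
    by (intro sum.cong refl) (simp add: lap_entry[OF fin] f_def sum_distrib_left sum_distrib_right mult_ac)
  also have "\<dots> = (\<Sum>i<n. \<Sum>e\<in>E. \<Sum>j<n. x $ i * x $ j * f e i j)"
    by (intro sum.cong refl) (rule sum.swap)
  also have "\<dots> = (\<Sum>e\<in>E. \<Sum>i<n. \<Sum>j<n. x $ i * x $ j * f e i j)"
    by (rule sum.swap)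
  also have "\<dots> = (\<Sum>e\<in>E. qe e x)"
  proof (intro sum.cong refl)
    fix e assume "e \<in> E"
    hence "e \<subseteq> {0..<n}" "card e \<ge> 2" using hg by (auto simp: hypergraph_def)
    from edge_form[OF this, of x] show "(\<Sum>i<n. \<Sum>j<n. x $ i * x $ j * f e i j) = qe e x"
      by (simp add: f_def qe_def)
  qed
  finally show ?thesis .
qed

lemma qe_shift:
  assumes fin: "finite e" and z: "\<And>i. i \<in> e \<Longrightarrow> z $ i = a + b * x $ i"
  shows "qe e z = b^2 * qe e x"
proof -
  define K where "K = real (card e)"
  define Sx where "Sx = (\<Sum>i\<in>e. x $ i)"
  define Sq where "Sq = (\<Sum>i\<in>e. (x $ i)^2)"
  have s1: "(\<Sum>i\<in>e. z $ i) = K * a + b * Sx"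
  proof -
    have "(\<Sum>i\<in>e. z $ i) = (\<Sum>i\<in>e. a + b * x $ i)" by (intro sum.cong refl) (simp add: z)
    also have "\<dots> = K * a + b * Sx" by (simp add: sum.distrib sum_distrib_left K_def Sx_def)
    finally show ?thesis .
  qed
  have s2: "(\<Sum>i\<in>e. (z $ i)^2) = K * a^2 + 2 * a * b * Sx + b^2 * Sq"
  proof -
    have sq: "\<And>u::real. (a + b * u)^2 = a^2 + 2 * a * b * u + b^2 * u^2"
      by (simp add: power2_eq_square algebra_simps)
    have "(\<Sum>i\<in>e. (z $ i)^2) = (\<Sum>i\<in>e. a^2 + 2 * a * b * x $ i + b^2 * (x $ i)^2)"
      by (intro sum.cong refl) (simp add: z sq)
    also have "\<dots> = K * a^2 + 2 * a * b * Sx + b^2 * Sq"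
      by (simp add: sum.distrib sum_distrib_left K_def Sx_def Sq_def)
    finally show ?thesis .
  qed
  have alg: "K * (K * a^2 + 2 * a * b * Sx + b^2 * Sq) - (K * a + b * Sx)^2 = b^2 * (K * Sq - Sx^2)"
    by (simp add: power2_eq_square algebra_simps)
  show ?thesis unfolding qe_def s1 s2 K_def[symmetric] Sx_def[symmetric] Sq_def[symmetric] alg
    by simp
qed

lemma qe_nonneg:
  assumes fin: "finite e" and ce: "card e \<ge> 2"
  shows "qe e x \<ge> 0"
proof -
  define K where "K = real (card e)"
  define Sx where "Sx = (\<Sum>i\<in>e. x $ i)"
  define Sq where "Sq = (\<Sum>i\<in>e. (x $ i)^2)"
  have "(\<Sum>i\<in>e. \<Sum>j\<in>e. (x $ i - x $ j)^2) = (\<Sum>i\<in>e. \<Sum>j\<in>e. (x $ i)^2 + (x $ j)^2 - 2 * (x $ i * x $ j))"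
    by (intro sum.cong refl) (simp add: power2_eq_square algebra_simps)
  also have "\<dots> = (\<Sum>i\<in>e. K * (x $ i)^2 + Sq - 2 * (x $ i * Sx))"
    by (intro sum.cong refl) (simp add: sum.distrib sum_subtractf sum_distrib_left K_def Sq_def Sx_def)
  also have "\<dots> = K * Sq + K * Sq - 2 * (Sx * Sx)"
    by (simp add: sum.distrib sum_subtractf sum_distrib_left[symmetric] sum_distrib_right[symmetric] K_def Sq_def Sx_def)
  finally have eq: "(\<Sum>i\<in>e. \<Sum>j\<in>e. (x $ i - x $ j)^2) = 2 * (K * Sq - Sx^2)"
    by (simp add: power2_eq_square)
  have "(\<Sum>i\<in>e. \<Sum>j\<in>e. (x $ i - x $ j)^2) \<ge> 0" by (intro sum_nonneg) auto
  hence "K * Sq - Sx^2 \<ge> 0" using eq by simp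
  moreover have "K - 1 > 0" using ce by (simp add: K_def)
  ultimately show ?thesis unfolding qe_def K_def[symmetric] Sx_def[symmetric] Sq_def[symmetric] by simp
qed

lemma card_split: "finite e \<Longrightarrow> card e = card (e \<inter> S) + card (e - S)"
  by (metis Int_Diff_Un Int_Diff_disjoint card_Un_disjoint finite_Diff finite_Int)

lemma qe_test:
  assumes e: "e \<subseteq> {0..<n}"
  shows "qe e (vec n (\<lambda>i. if i \<in> S then p else - q))
     = real (card (e \<inter> S)) * real (card (e - S)) * (p + q)^2 / (real (card e) - 1)"
proof -
  define x where "x = vec n (\<lambda>i. if i \<in> S then p else - q)"
  have fin: "finite e" using e finite_subset by blast
  define a where "a = real (card (e \<inter> S))"
  define b where "b = real (card (e - S))"
  have k: "real (card e) = a + b" using card_split[OF fin, of S] by (simp add: a_def b_def)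
  have xi: "x $ i = (if i \<in> S then p else - q)" if "i \<in> e" for i
    using that e by (auto simp: x_def)
  have eS: "e \<inter> {i. i \<in> S} = e \<inter> S" "e \<inter> - {i. i \<in> S} = e - S" by auto
  have s1: "(\<Sum>i\<in>e. x $ i) = a * p - b * q"
  proof -
    have "(\<Sum>i\<in>e. x $ i) = (\<Sum>i\<in>e. if i \<in> S then p else - q)" by (intro sum.cong refl) (simp add: xi)
    also have "\<dots> = (\<Sum>i\<in>e \<inter> S. p) + (\<Sum>i\<in>e - S. - q)" using sum.If_cases[OF fin, of "\<lambda>i. i \<in> S" "\<lambda>_. p" "\<lambda>_. - q"] by (simp add: Diff_eq)
    finally show ?thesis by (simp add: a_def b_def)
  qed
  have s2: "(\<Sum>i\<in>e. (x $ i)^2) = a * p^2 + b * q^2"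
  proof -
    have "(\<Sum>i\<in>e. (x $ i)^2) = (\<Sum>i\<in>e. if i \<in> S then p^2 else q^2)" by (intro sum.cong refl) (simp add: xi)
    also have "\<dots> = (\<Sum>i\<in>e \<inter> S. p^2) + (\<Sum>i\<in>e - S. q^2)" using sum.If_cases[OF fin, of "\<lambda>i. i \<in> S" "\<lambda>_. p^2" "\<lambda>_. q^2"] by (simp add: Diff_eq)
    finally show ?thesis by (simp add: a_def b_def)
  qed
  have alg: "(a + b) * (a * p^2 + b * q^2) - (a * p - b * q)^2 = a * b * (p + q)^2"
    by (simp add: power2_eq_square algebra_simps)
  show ?thesis unfolding x_def[symmetric] qe_def s1 s2 k alg by (simp add: a_def b_def)
qed

lemma eigval_zero:
  assumes "1 \<le> k" "k \<le> n"
  shows "eigval (0\<^sub>m n n :: real mat) k = 0"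
proof -
  have Z: "(0\<^sub>m n n :: real mat) \<in> carrier_mat n n" by simp
  have ut: "upper_triangular (0\<^sub>m n n :: real mat)" by (simp add: upper_triangular_def)
  have "char_poly (0\<^sub>m n n :: real mat) = (\<Prod>a\<leftarrow>diag_mat (0\<^sub>m n n). [:- a, 1:])"
    using char_poly_upper_triangular[OF Z ut] .
  also have "diag_mat (0\<^sub>m n n :: real mat) = replicate n 0"
    by (intro nth_equalityI) (auto simp: diag_mat_def)
  finally have "proots (char_poly (0\<^sub>m n n :: real mat)) = mset (replicate n (0::real))"
    by (simp only: proots_lin_prod)
  hence "sorted_list_of_multiset (proots (char_poly (0\<^sub>m n n :: real mat))) = sort (replicate n 0)"
    by (simp only: sorted_list_of_multiset_mset)
  also have "sort (replicate n (0::real)) = replicate n 0" by (rule sorted_sort_id) simp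
  finally show ?thesis using assms by (simp add: eigval_def)
qed

lemma lap_empty: "hlaplacian n {} = 0\<^sub>m n n"
  by (rule eq_matI) (auto simp: hlaplacian_def hdegree_def)

theorem theorem6:
  fixes n :: nat and E :: "nat set set" and S :: "nat set"
  assumes "hypergraph n E"
    and "S \<noteq> {}" and "S \<subset> {0..<n}"
  shows "(real (hrank E) - 1) * (eigval (hlaplacian n E) n * real (card S) * real (card ({0..<n} - S)) / real n)
           \<ge> real (card (edge_boundary n E S))
       \<and> real (card (edge_boundary n E S))
           \<ge> (real (hcorank E) - 1) / real (hrank E ^ 2 div 4)
             * (eigval (hlaplacian n E) 2 * real (card S) * real (card ({0..<n} - S)) / real n)"
proof -
  note hg = assms(1)
  let ?L = "hlaplacian n E"
  define s where "s = card S"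
  define s' where "s' = card ({0..<n} - S)"
  have finS: "finite S" using assms(3) finite_subset by blast
  have ns: "n = s + s'" unfolding s_def s'_def
    using card_Diff_subset[OF finS, of "{0..<n}"] card_mono[of "{0..<n}" S] assms(3) by auto
  have s1: "s \<ge> 1" using assms(2) finS by (simp add: s_def Suc_le_eq card_gt_0_iff)
  have s'1: "s' \<ge> 1"
  proof -
    have "{0..<n} - S \<noteq> {}" using assms(3) by blast
    thus ?thesis by (simp add: s'_def Suc_le_eq card_gt_0_iff)
  qed
  have n2: "n \<ge> 2" using ns s1 s'1 by simp
  have fin: "finite E" using hyp_finite[OF hg] .
  have Ee: "e \<subseteq> {0..<n}" "card e \<ge> 2" "finite e" if "e \<in> E" for e
    using hg that finite_subset[of e "{0..<n}"] by (auto simp: hypergraph_def)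
  define x where "x = vec n (\<lambda>i. if i \<in> S then real s' else - real s)"
  define J where "J = vec n (\<lambda>i. 1::real)"
  have x: "x \<in> carrier_vec n" and J: "J \<in> carrier_vec n" by (simp_all add: x_def J_def)
  have SI: "{0..<n} \<inter> {i. i \<in> S} = S" "{0..<n} \<inter> - {i. i \<in> S} = {0..<n} - S" using assms(3) by auto
  have xJ: "x \<bullet> J = 0"
  proof -
    have "x \<bullet> J = (\<Sum>i\<in>{0..<n}. if i \<in> S then real s' else - real s)"
      unfolding scalar_prod_def by (simp add: x_def J_def)
    also have "\<dots> = (\<Sum>i\<in>S. real s') + (\<Sum>i\<in>{0..<n} - S. - real s)"
      using sum.If_cases[of "{0..<n}" "\<lambda>i. i \<in> S" "\<lambda>_. real s'" "\<lambda>_. - real s"] SI by simp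
    finally show ?thesis by (simp add: s_def s'_def)
  qed
  have xx: "x \<bullet> x = real s * real s' * real n"
  proof -
    have "x \<bullet> x = (\<Sum>i\<in>{0..<n}. if i \<in> S then real s' ^ 2 else real s ^ 2)"
      unfolding scalar_prod_def by (intro sum.cong) (auto simp: x_def power2_eq_square)
    also have "\<dots> = (\<Sum>i\<in>S. real s' ^ 2) + (\<Sum>i\<in>{0..<n} - S. real s ^ 2)"
      using sum.If_cases[of "{0..<n}" "\<lambda>i. i \<in> S" "\<lambda>_. real s' ^ 2" "\<lambda>_. real s ^ 2"] SI by simp
    also have "\<dots> = real s * real s' ^ 2 + real s' * real s ^ 2" by (simp add: s_def s'_def)
    finally show ?thesis unfolding ns by (simp add: power2_eq_square algebra_simps)
  qed
  have JJ: "J \<bullet> J > 0"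
  proof -
    have "J \<bullet> J = real n" unfolding scalar_prod_def by (simp add: J_def)
    thus ?thesis using n2 by simp
  qed
  define a where "a e = real (card (e \<inter> S))" for e
  define b where "b e = real (card (e - S))" for e
  define t where "t e = a e * b e / (real (card e) - 1)" for e
  define T where "T = (\<Sum>e\<in>E. t e)"
  have qx: "qe e x = real n ^ 2 * t e" if "e \<in> E" for e
    using qe_test[OF Ee(1)[OF that], of S "real s'" "real s"] unfolding x_def[symmetric]
    by (simp add: t_def a_def b_def ns)
  have xLx: "x \<bullet> (?L *\<^sub>v x) = real n ^ 2 * T"
    unfolding lap_quad[OF hg x] T_def sum_distrib_left by (intro sum.cong refl) (simp add: qx)
  have psd: "y \<bullet> (?L *\<^sub>v y) \<ge> 0" if "y \<in> carrier_vec n" for y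
    unfolding lap_quad[OF hg that] by (intro sum_nonneg qe_nonneg) (auto dest: Ee)
  have shift: "(a0 \<cdot>\<^sub>v J + b0 \<cdot>\<^sub>v y) \<bullet> (?L *\<^sub>v (a0 \<cdot>\<^sub>v J + b0 \<cdot>\<^sub>v y)) = b0^2 * (y \<bullet> (?L *\<^sub>v y))"
    if y: "y \<in> carrier_vec n" for y a0 b0
  proof -
    have w: "a0 \<cdot>\<^sub>v J + b0 \<cdot>\<^sub>v y \<in> carrier_vec n" using J y by simp
    show ?thesis unfolding lap_quad[OF hg w] lap_quad[OF hg y] sum_distrib_left
    proof (intro sum.cong refl qe_shift)
      fix e i assume e: "e \<in> E" and i: "i \<in> e"
      hence "i < n" using Ee(1)[OF e] by auto
      thus "(a0 \<cdot>\<^sub>v J + b0 \<cdot>\<^sub>v y) $ i = a0 + b0 * y $ i" using J y by (simp add: J_def)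
    qed (auto dest: Ee)
  qed
  have up: "x \<bullet> (?L *\<^sub>v x) \<le> eigval ?L n * (x \<bullet> x)"
    by (rule rayleigh_max[OF lap_carrier lap_sym _ x]) (use n2 in simp)
  have lo: "eigval ?L 2 * (x \<bullet> x) \<le> x \<bullet> (?L *\<^sub>v x)"
    by (rule rayleigh_second[OF lap_carrier lap_sym n2 J psd shift x xJ JJ])
  have npos: "real n > 0" using n2 by simp
  define U where "U = eigval ?L n * real s * real s' / real n"
  define V where "V = eigval ?L 2 * real s * real s' / real n"
  have TU: "T \<le> U"
  proof -
    have "real n ^ 2 * T \<le> eigval ?L n * (real s * real s' * real n)" using up xLx xx by simp
    hence "real n * (real n * T) \<le> real n * (eigval ?L n * real s * real s')"
      by (simp add: power2_eq_square algebra_simps)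
    hence "real n * T \<le> eigval ?L n * real s * real s'" using npos by simp
    thus ?thesis unfolding U_def using npos by (simp add: field_simps)
  qed
  have VT: "V \<le> T"
  proof -
    have "eigval ?L 2 * (real s * real s' * real n) \<le> real n ^ 2 * T" using lo xLx xx by simp
    hence "real n * (eigval ?L 2 * real s * real s') \<le> real n * (real n * T)"
      by (simp add: power2_eq_square algebra_simps)
    hence "eigval ?L 2 * real s * real s' \<le> real n * T" using npos by simp
    thus ?thesis unfolding V_def using npos by (simp add: field_simps)
  qed
  define B where "B = edge_boundary n E S"
  have Bdef: "B = {e\<in>E. a e \<ge> 1 \<and> b e \<ge> 1}"
  proof -
    have h1: "e \<inter> ({0..<n} - S) = e - S" if "e \<in> E" for e using Ee(1)[OF that] by auto
    have h2: "(e \<inter> S \<noteq> {}) = (a e \<ge> 1)" "(e - S \<noteq> {}) = (b e \<ge> 1)" if "e \<in> E" for e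
      using Ee(3)[OF that] by (auto simp: a_def b_def Suc_le_eq card_gt_0_iff)
    show ?thesis unfolding B_def edge_boundary_def
    proof (rule Collect_cong)
      fix e
      show "(e \<in> E \<and> e \<inter> S \<noteq> {} \<and> e \<inter> ({0..<n} - S) \<noteq> {}) = (e \<in> E \<and> 1 \<le> a e \<and> 1 \<le> b e)"
      proof (cases "e \<in> E")
        case True
        show ?thesis using h1[OF True] h2[OF True] True by (simp only: simp_thms)
      qed simp
    qed
  qed
  have kab: "real (card e) = a e + b e" if "e \<in> E" for e
    using card_split[OF Ee(3)[OF that], of S] by (simp add: a_def b_def)
  have t0: "t e = 0" if "e \<in> E" "e \<notin> B" for e
  proof -
    have "\<not> (1 \<le> card (e \<inter> S) \<and> 1 \<le> card (e - S))" using that Bdef by (auto simp: a_def b_def)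
    hence "card (e \<inter> S) = 0 \<or> card (e - S) = 0" by auto
    thus ?thesis by (auto simp: t_def a_def b_def)
  qed
  have finB: "finite B" using fin Bdef by simp
  have BE: "B \<subseteq> E" using Bdef by auto
  have TB: "T = (\<Sum>e\<in>B. t e)" unfolding T_def
    by (rule sum.mono_neutral_right[OF fin BE]) (use t0 in auto)
  have t1: "t e \<ge> 1" if "e \<in> B" for e
  proof -
    have e: "e \<in> E" "a e \<ge> 1" "b e \<ge> 1" using that Bdef by auto
    have "(a e - 1) * (b e - 1) \<ge> 0" using e by simp
    hence "a e * b e \<ge> a e + b e - 1" by (simp add: algebra_simps)
    moreover have "a e + b e - 1 > 0" using e by simp
    ultimately show ?thesis unfolding t_def kab[OF e(1)] by simp
  qed
  have cardB: "real (card B) \<le> T"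
  proof -
    have "real (card B) = (\<Sum>e\<in>B. 1)" by simp
    also have "\<dots> \<le> (\<Sum>e\<in>B. t e)" by (intro sum_mono t1)
    finally show ?thesis using TB by simp
  qed
  show ?thesis
  proof (cases "E = {}")
    case True
    have B0: "B = {}" using BE True by auto
    have "eigval ?L n = 0" "eigval ?L 2 = 0" using True lap_empty[of n] eigval_zero n2 by auto
    thus ?thesis using B0 unfolding B_def by simp
  next
    case False
    define r where "r = hrank E"
    define c where "c = hcorank E"
    define F where "F = r ^ 2 div 4"
    have rge: "card e \<le> r" if "e \<in> E" for e unfolding r_def hrank_def using fin that by simp
    have cle: "c \<le> card e" if "e \<in> E" for e unfolding c_def hcorank_def using fin that by simp
    obtain e0 where e0: "e0 \<in> E" using False by blast
    have c2: "c \<ge> 2"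
    proof -
      have "c \<in> card ` E" unfolding c_def hcorank_def using fin False by (intro Min_in) auto
      thus ?thesis using Ee(2) by auto
    qed
    have r2: "r \<ge> 2" using rge[OF e0] Ee(2)[OF e0] by simp
    have F1: "F \<ge> 1" unfolding F_def
    proof -
      have "4 \<le> r ^ 2" using r2 power_mono[of 2 r 2] by simp
      thus "1 \<le> r ^ 2 div 4" by simp
    qed
    have U0: "U \<ge> 0" using cardB TU by simp
    have part1: "(real r - 1) * U \<ge> real (card B)"
    proof -
      have "(real r - 1) * U \<ge> 1 * U" using r2 U0 by (intro mult_right_mono) auto
      thus ?thesis using cardB TU by simp
    qed
    have tF: "t e \<le> real F / (real c - 1)" if "e \<in> B" for e
    proof -
      have e: "e \<in> E" using that BE by auto
      define an where "an = card (e \<inter> S)"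
      define bn where "bn = card (e - S)"
      have kn: "card e = an + bn" using card_split[OF Ee(3)[OF e], of S] by (simp add: an_def bn_def)
      have "4 * (an * bn) \<le> (an + bn)^2"
      proof -
        have "(int an - int bn)^2 \<ge> 0" by simp
        hence "4 * (int an * int bn) \<le> (int an + int bn)^2" by (simp add: power2_eq_square algebra_simps)
        hence "int (4 * (an * bn)) \<le> int ((an + bn)^2)" by simp
        thus ?thesis by linarith
      qed
      hence "an * bn \<le> (an + bn)^2 div 4" by simp
      also have "(an + bn)^2 div 4 \<le> F" unfolding F_def
        using rge[OF e] kn by (intro div_le_mono power_mono) auto
      finally have abF: "a e * b e \<le> real F"
        by (simp add: a_def b_def an_def bn_def flip: of_nat_mult)
      have k1: "real (card e) - 1 \<ge> real c - 1" using cle[OF e] by simp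
      have c1: "real c - 1 > 0" using c2 by simp
      have ab0: "a e * b e \<ge> 0" by (simp add: a_def b_def)
      have "t e = a e * b e / (real (card e) - 1)" by (simp add: t_def)
      also have "\<dots> \<le> a e * b e / (real c - 1)"
        using k1 c1 ab0 by (intro divide_left_mono) auto
      also have "\<dots> \<le> real F / (real c - 1)" using abF c1 by (intro divide_right_mono) auto
      finally show ?thesis .
    qed
    have TF: "T \<le> real (card B) * (real F / (real c - 1))"
    proof -
      have "T \<le> (\<Sum>e\<in>B. real F / (real c - 1))" unfolding TB by (intro sum_mono tF)
      thus ?thesis by simp
    qed
    have part2: "real (card B) \<ge> (real c - 1) / real F * V"
    proof -
      have c1: "real c - 1 > 0" using c2 by simp
      have Fp: "real F > 0" using F1 by simp
      have "(real c - 1) / real F * V \<le> (real c - 1) / real F * (real (card B) * (real F / (real c - 1)))"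
        using VT TF c1 Fp by (intro mult_left_mono) auto
      also have "\<dots> = real (card B)" using c1 Fp by (simp add: field_simps)
      finally show ?thesis .
    qed
    show ?thesis using part1 part2
      unfolding B_def U_def V_def r_def c_def F_def s_def s'_def by (simp add: mult.assoc)
  qed
qed

end
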